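(* Let $A$ be a commutative algebra over a field with multiplication $\star$ satisfying the Tortken identity $$(a\star b)\star(c\star d)-(a\star d)\star(c\star b)=(a,b,c)\star d-(a,d,c)\star b\quad\text{for all }a,b,c,d\in A.$$ Then for all $a,b,c,x\in A$: $(a,b\star x,c)+(b,c\star x,a)+(c,a\star x,b)=0$.
   Context: The associator is $(a,b,c)=a\star(b\star c)-(a\star b)\star c$. *)

theory Defs
  imports Complex_Main
begin

definition bilinear_mult :: "('k::field \<Rightarrow> 'v::ab_group_add \<Rightarrow> 'v) \<Rightarrow> ('v \<Rightarrow> 'v \<Rightarrow> 'v) \<Rightarrow> bool" where
  "bilinear_mult sc m \<longleftrightarrow>
     (\<forall>a b c. m (a + b) c = m a c + m b c) \<and>
     (\<forall>a b c. m a (b + c) = m a b + m a c) \<and>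
     (\<forall>k a b. m (sc k a) b = sc k (m a b)) \<and>
     (\<forall>k a b. m a (sc k b) = sc k (m a b))"

definition assoc :: "('v \<Rightarrow> 'v \<Rightarrow> 'v) \<Rightarrow> 'v \<Rightarrow> 'v \<Rightarrow> 'v \<Rightarrow> 'v::ab_group_add" where
  "assoc m a b c = m a (m b c) - m (m a b) c"

end

theory Submission
  imports Defs
begin

theorem mainTheorem5:
  fixes sc :: "'k::field \<Rightarrow> 'v::ab_group_add \<Rightarrow> 'v"
    and m :: "'v \<Rightarrow> 'v \<Rightarrow> 'v"
  assumes vs: "vector_space sc"
    and bil: "bilinear_mult sc m"
    and comm: "\<forall>a b. m a b = m b a"
    and tortken: "\<forall>a b c d. m (m a b) (m c d) - m (m a d) (m c b)
                     = m (assoc m a b c) d - m (assoc m a d c) b"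
  shows "\<forall>a b c x. assoc m a (m b x) c + assoc m b (m c x) a + assoc m c (m a x) b = 0"
proof (intro allI)
  fix a b c x
  have addL: "\<And>a b c. m (a + b) c = m a c + m b c"
   and addR: "\<And>a b c. m a (b + c) = m a b + m a c"
    using bil unfolding bilinear_mult_def by auto
  have C: "\<And>a b. m a b = m b a" using comm by auto
  have diffR: "\<And>a b c. m a (b - c) = m a b - m a c"
    by (metis addR add_diff_cancel eq_diff_eq)
  have diffL: "\<And>a b c. m (a - b) c = m a c - m b c"
    by (metis addL add_diff_cancel eq_diff_eq)
  have T1: "m (assoc m b x c) a - m (assoc m b a c) x = m (m b x) (m c a) - m (m b a) (m c x)"
    using tortken by metis
  have T2: "m (assoc m c x a) b - m (assoc m c b a) x = m (m c x) (m a b) - m (m c b) (m a x)"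
    using tortken by metis
  have T3: "m (assoc m a x b) c - m (assoc m a c b) x = m (m a x) (m b c) - m (m a c) (m b x)"
    using tortken by metis
  have E: "(m (assoc m b x c) a - m (assoc m b a c) x) + (m (assoc m c x a) b - m (assoc m c b a) x)
      + (m (assoc m a x b) c - m (assoc m a c b) x) = 0"
    unfolding T1 T2 T3 by (simp add: C algebra_simps)
  have Z: "m (assoc m b a c) x + m (assoc m c b a) x + m (assoc m a c b) x = 0"
    unfolding assoc_def by (simp add: diffL diffR C algebra_simps)
  have S: "m (assoc m b x c) a + m (assoc m c x a) b + m (assoc m a x b) c = 0"
  proof -
    have "m (assoc m b x c) a + m (assoc m c x a) b + m (assoc m a x b) c
      = ((m (assoc m b x c) a - m (assoc m b a c) x) + (m (assoc m c x a) b - m (assoc m c b a) x)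
      + (m (assoc m a x b) c - m (assoc m a c b) x)) + (m (assoc m b a c) x + m (assoc m c b a) x + m (assoc m a c b) x)"
      by (simp add: algebra_simps)
    then show ?thesis using E Z by simp
  qed
  show "assoc m a (m b x) c + assoc m b (m c x) a + assoc m c (m a x) b = 0"
    using S unfolding assoc_def
    by (simp add: diffL diffR C algebra_simps)
qed

end
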